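(* Let $N$ be a positive integer and $\epsilon_s>0$, and let $\mathcal A=\{x_1,\dots,x_N\}$ be $N$ real data points in a bounded interval $[x_L,x_U]$. Let $N_c^{med}$ be the size of the smaller of the two blocks $\mathcal A\cap[x_L,r)$, $\mathcal A\cap[r,x_U]$ when the split point $r$ is drawn from the density on $[x_L,x_U]$ proportional to $\exp\{\epsilon_s q(r)/2\}$ with $q(r)=-\big|\,|\mathcal A\cap[x_L,r)|-|\mathcal A\cap[r,x_U]|\,\big|$ (the differentially private median split), and let $N_c^{rand}$ be the corresponding size when the split point $r$ is drawn uniformly at random from $[x_L,x_U]$. Then for any $0<t<N/2$, $$\Pr(N_c^{med}\le t)\le\Pr(N_c^{rand}\le t).$$
   Context: The density proportional to $\exp\{\epsilon_s q(r)/2\}$ is taken with respect to Lebesgue measure on $[x_L,x_U]$; this is the exponential mechanism giving an $\epsilon_s$-differentially private median split. *)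

theory Defs
  imports "HOL-Probability.Probability"
begin

text \<open>Data set A = {x_0,...,x_(N-1)} (points counted with multiplicity), given as
  x :: nat => real restricted to indices i < N.\<close>

definition left_count :: "(nat \<Rightarrow> real) \<Rightarrow> nat \<Rightarrow> real \<Rightarrow> real \<Rightarrow> nat" where
  "left_count x N xL r = card {i. i < N \<and> xL \<le> x i \<and> x i < r}"

definition right_count :: "(nat \<Rightarrow> real) \<Rightarrow> nat \<Rightarrow> real \<Rightarrow> real \<Rightarrow> nat" where
  "right_count x N xU r = card {i. i < N \<and> r \<le> x i \<and> x i \<le> xU}"

definition split_utility :: "(nat \<Rightarrow> real) \<Rightarrow> nat \<Rightarrow> real \<Rightarrow> real \<Rightarrow> real \<Rightarrow> real" where
  "split_utility x N xL xU r =
     - \<bar>real (left_count x N xL r) - real (right_count x N xU r)\<bar>"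

definition smaller_block :: "(nat \<Rightarrow> real) \<Rightarrow> nat \<Rightarrow> real \<Rightarrow> real \<Rightarrow> real \<Rightarrow> nat" where
  "smaller_block x N xL xU r = min (left_count x N xL r) (right_count x N xU r)"

definition med_weight :: "real \<Rightarrow> (nat \<Rightarrow> real) \<Rightarrow> nat \<Rightarrow> real \<Rightarrow> real \<Rightarrow> real \<Rightarrow> real" where
  "med_weight eps x N xL xU r = exp (eps * split_utility x N xL xU r / 2)"

definition dp_median_split :: "real \<Rightarrow> (nat \<Rightarrow> real) \<Rightarrow> nat \<Rightarrow> real \<Rightarrow> real \<Rightarrow> real measure" where
  "dp_median_split eps x N xL xU =
     density lborel (\<lambda>r. ennreal (indicator {xL..xU} r * med_weight eps x N xL xU r
        / (LINT s:{xL..xU}|lborel. med_weight eps x N xL xU s)))"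

definition random_split :: "real \<Rightarrow> real \<Rightarrow> real measure" where
  "random_split xL xU = uniform_measure lborel {xL..xU}"

end

theory Submission
  imports Defs
begin

lemma card_sum: "real (card {i. i < N \<and> P i}) = (\<Sum>i<(N::nat). of_bool (P i))"
proof -
  have e: "{i. i < N \<and> P i} = {i\<in>{..<N}. P i}" by auto
  have "(\<Sum>i<N. (of_bool (P i)::real)) = (\<Sum>i<N. if P i then 1 else 0)" by (intro sum.cong) auto
  also have "\<dots> = (\<Sum>i\<in>{i\<in>{..<N}. P i}. 1)" by (rule sum.inter_filter[symmetric]) simp
  also have "\<dots> = real (card {i. i < N \<and> P i})" unfolding e by simp
  finally show ?thesis by simp
qed

lemma lc_eq: "real (left_count x N xL r) = (\<Sum>i<N. of_bool (xL \<le> x i) * of_bool (x i < r))"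
  unfolding left_count_def card_sum by (intro sum.cong) auto

lemma rc_eq: "real (right_count x N xU r) = (\<Sum>i<N. of_bool (x i \<le> xU) * of_bool (r \<le> x i))"
  unfolding right_count_def card_sum by (intro sum.cong) auto

lemma lc_meas[measurable]: "(\<lambda>r. real (left_count x N xL r)) \<in> borel_measurable borel"
  unfolding lc_eq by measurable
lemma rc_meas[measurable]: "(\<lambda>r. real (right_count x N xU r)) \<in> borel_measurable borel"
  unfolding rc_eq by measurable

lemma sb_meas[measurable]: "(\<lambda>r. real (smaller_block x N xL xU r)) \<in> borel_measurable borel"
  unfolding smaller_block_def of_nat_min by measurable

lemma w_meas[measurable]: "med_weight eps x N xL xU \<in> borel_measurable borel"
  unfolding med_weight_def[abs_def] split_utility_def by measurable

lemma lr_sum: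
  assumes "\<And>i. i < N \<Longrightarrow> x i \<in> {xL..xU}"
  shows "real (left_count x N xL r) + real (right_count x N xU r) = real N"
proof -
  have "real (left_count x N xL r) + real (right_count x N xU r)
     = (\<Sum>i<N. of_bool (xL \<le> x i) * of_bool (x i < r) + of_bool (x i \<le> xU) * of_bool (r \<le> x i))"
    unfolding lc_eq rc_eq sum.distrib by simp
  also have "\<dots> = (\<Sum>i<N. (1::real))"
    using assms by (intro sum.cong) auto
  finally show ?thesis by simp
qed

lemma w_eq:
  assumes "\<And>i. i < N \<Longrightarrow> x i \<in> {xL..xU}"
  shows "med_weight eps x N xL xU r = exp (eps * (2 * real (smaller_block x N xL xU r) - real N) / 2)"
proof -
  have h: "real (left_count x N xL r) + real (right_count x N xU r) = real N"
    using assms by (rule lr_sum)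
  have "\<bar>real (left_count x N xL r) - real (right_count x N xU r)\<bar> = real N - 2 * real (smaller_block x N xL xU r)"
    using h unfolding smaller_block_def of_nat_min by (auto simp: abs_if min_def)
  then show ?thesis unfolding med_weight_def split_utility_def by simp
qed

lemma w_bound: "eps > 0 \<Longrightarrow> 0 < med_weight eps x N xL xU r \<and> med_weight eps x N xL xU r \<le> 1"
  unfolding med_weight_def split_utility_def by auto

theorem mainTheorem4:
  fixes N :: nat and eps :: real and x :: "nat \<Rightarrow> real" and xL xU t :: real
  assumes "N > 0" and "eps > 0" and "xL < xU"
    and "\<And>i. i < N \<Longrightarrow> x i \<in> {xL..xU}"
    and "0 < t" and "t < real N / 2"
  shows "measure (dp_median_split eps x N xL xU) {r. real (smaller_block x N xL xU r) \<le> t}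
       \<le> measure (random_split xL xU) {r. real (smaller_block x N xL xU r) \<le> t}"
proof -
  define I where "I = {xL..xU}"
  define S where "S = {r. real (smaller_block x N xL xU r) \<le> t}"
  define w where "w = med_weight eps x N xL xU"
  define Z where "Z = (LINT s:I|lborel. w s)"
  define A where "A = (LINT s:S\<inter>I|lborel. w s)"
  define B where "B = (LINT s:I-S|lborel. w s)"
  define a where "a = measure lborel (S \<inter> I)"
  define b where "b = measure lborel (I - S)"
  define c where "c = exp (eps * (2 * t - real N) / 2)"
  have Smeas[measurable]: "S \<in> sets borel" unfolding S_def by measurable
  have Imeas[measurable]: "I \<in> sets borel" unfolding I_def by simp
  have wmeas[measurable]: "w \<in> borel_measurable borel" unfolding w_def by measurable
  have wb: "0 < w r" "w r \<le> 1" for r using w_bound[OF assms(2)] unfolding w_def by auto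
  have Ifin: "emeasure lborel I < \<infinity>" unfolding I_def using assms(3) by simp
  have intI: "set_integrable lborel I w"
    unfolding set_integrable_def
    by (rule integrableI_bounded_set_indicator[where B=1]) (use Ifin wb in \<open>auto simp: abs_of_pos\<close>)
  have intSI: "set_integrable lborel (S\<inter>I) w"
    by (rule set_integrable_subset[OF intI]) auto
  have intIS: "set_integrable lborel (I-S) w"
    by (rule set_integrable_subset[OF intI]) auto
  have c0: "0 < c" unfolding c_def by simp
  have intc: "set_integrable lborel I (\<lambda>_. c)"
    unfolding set_integrable_def
    by (rule integrableI_bounded_set_indicator[where B=c]) (use Ifin c0 in auto)
  have intcSI: "set_integrable lborel (S\<inter>I) (\<lambda>_. c)"
    by (rule set_integrable_subset[OF intc]) auto
  have intcIS: "set_integrable lborel (I-S) (\<lambda>_. c)"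
    by (rule set_integrable_subset[OF intc]) auto
  have SIfin: "emeasure lborel (S\<inter>I) \<noteq> \<infinity>"
    using emeasure_mono[of "S\<inter>I" I lborel] Ifin by auto
  have ISfin: "emeasure lborel (I-S) \<noteq> \<infinity>"
    using emeasure_mono[of "I-S" I lborel] Ifin by auto
  have ZAB: "Z = A + B"
  proof -
    have "I = (S\<inter>I) \<union> (I-S)" by auto
    then have "Z = (LINT s:(S\<inter>I) \<union> (I-S)|lborel. w s)" unfolding Z_def by simp
    also have "\<dots> = A + B" unfolding A_def B_def
      by (rule set_integral_Un) (use intSI intIS in auto)
    finally show ?thesis .
  qed
  have weq: "w r = exp (eps * (2 * real (smaller_block x N xL xU r) - real N) / 2)" for r
    unfolding w_def by (rule w_eq) (use assms(4) in auto)
  have wS: "w r \<le> c" if "r \<in> S \<inter> I" for r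
    using that assms(2) unfolding weq c_def S_def by (auto simp: mult_left_mono)
  have wIS: "c \<le> w r" if "r \<in> I - S" for r
    using that assms(2) unfolding weq c_def S_def by (auto simp: mult_left_mono)
  have Ale: "A \<le> c * a"
  proof -
    have "A \<le> (LINT s:S\<inter>I|lborel. c)" unfolding A_def
      by (rule set_integral_mono[OF intSI intcSI wS])
    also have "\<dots> = c * a" unfolding a_def using SIfin by (simp add: set_integral_const)
    finally show ?thesis .
  qed
  have Bge: "c * b \<le> B"
  proof -
    have "c * b = (LINT s:I-S|lborel. c)" unfolding b_def using ISfin by (simp add: set_integral_const)
    also have "\<dots> \<le> B" unfolding B_def
      by (rule set_integral_mono[OF intcIS intIS wIS])
    finally show ?thesis .
  qed
  have A0: "0 \<le> A" unfolding A_def set_lebesgue_integral_def using wb by (intro integral_nonneg_AE AE_I2) (auto simp: indicator_def less_imp_le)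
  have B0: "0 \<le> B" unfolding B_def set_lebesgue_integral_def using wb by (intro integral_nonneg_AE AE_I2) (auto simp: indicator_def less_imp_le)
  have ab: "a + b = xU - xL"
  proof -
    have "b = measure lborel (I - (S\<inter>I))" unfolding b_def by (metis Diff_Int2 Int_absorb)
    also have "\<dots> = measure lborel I - a" unfolding a_def
      by (rule measure_Diff) (use Ifin in auto)
    finally show ?thesis unfolding I_def using assms(3) by simp
  qed
  have a0: "0 \<le> a" "0 \<le> b" unfolding a_def b_def by auto
  have dp: "measure (dp_median_split eps x N xL xU) S = A / Z"
  proof -
    have "emeasure (dp_median_split eps x N xL xU) S
        = (\<integral>\<^sup>+ r. ennreal (indicator I r * w r / Z) * indicator S r \<partial>lborel)"
      unfolding dp_median_split_def w_def[symmetric] I_def[symmetric] Z_def[symmetric]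
      by (rule emeasure_density) auto
    also have "\<dots> = (\<integral>\<^sup>+ r. ennreal (indicator (S\<inter>I) r * w r / Z) \<partial>lborel)"
      by (intro nn_integral_cong) (auto simp: indicator_def)
    also have "\<dots> = ennreal (\<integral> r. indicator (S\<inter>I) r * w r / Z \<partial>lborel)"
    proof (rule nn_integral_eq_integral)
      show "integrable lborel (\<lambda>r. indicator (S \<inter> I) r * w r / Z)"
        using intSI unfolding set_integrable_def by (intro integrable_divide) simp
      show "AE r in lborel. 0 \<le> indicator (S \<inter> I) r * w r / Z"
        using wb ZAB A0 B0 by (intro AE_I2 divide_nonneg_nonneg mult_nonneg_nonneg) (auto intro: less_imp_le)
    qed
    also have "(\<integral> r. indicator (S\<inter>I) r * w r / Z \<partial>lborel) = A / Z"
      unfolding A_def set_lebesgue_integral_def by simp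
    finally show ?thesis using A0 B0 ZAB unfolding measure_def by simp
  qed
  have rs0: "measure (random_split xL xU) S = a / (xU - xL)"
    unfolding random_split_def a_def using assms(3)
    by (subst measure_uniform_measure) (auto simp: I_def Int_commute)
  have rs: "measure (random_split xL xU) S = a / (a + b)" using rs0 ab by simp
  have "A / Z \<le> a / (a + b)"
  proof (cases "Z = 0")
    case True then show ?thesis using a0 by simp
  next
    case False
    then have Zp: "Z > 0" using ZAB A0 B0 by simp
    have abp: "a + b > 0" using ab assms(3) by simp
    have "A * b \<le> a * B"
    proof -
      have "A * b \<le> c * a * b" using Ale a0 by (simp add: mult_right_mono)
      also have "\<dots> = a * (c * b)" by simp
      also have "\<dots> \<le> a * B" using Bge a0 by (simp add: mult_left_mono)
      finally show ?thesis .
    qed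
    then have "A * (a + b) \<le> a * Z" unfolding ZAB by (simp add: algebra_simps)
    then show ?thesis using Zp abp by (simp add: divide_simps)
  qed
  then show ?thesis using dp rs unfolding S_def by simp
qed

end
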